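(* Let $f\in\mathbb{R}[x_1,\dots,x_n]$ be a homogeneous polynomial of degree $d$, let $A=A(f)=\bigoplus_{i=0}^d A_i$, let $k$ be an integer with $0\le k\le \lfloor d/2\rfloor$, let $B_k=\{\alpha_1,\dots,\alpha_m\}$ be homogeneous elements of degree $k$ of $Q$ whose images form an $\mathbb{R}$-basis of $A_k$, and let $\bm F=(F_1,\dots,F_m)^{\mathrm T}\in\mathbb{R}[x_1,\dots,x_n]^m$ satisfy $\bm H_{B_k}(f)\,\bm F=\bm 0$. Then: (1) For every $(a_1,\dots,a_n)\in\mathbb{R}^n$, setting $\ell=a_1\partial_1+\dots+a_n\partial_n\in A_1$ and $\xi=\sum_{i=1}^m F_i(a_1,\dots,a_n)\,\alpha_i\in A_k$, the element $\xi$ lies in the kernel of the multiplication map $\times\ell^{d-2k}\colon A_k\to A_{d-k}$. (2) $\sum_{i=1}^m F_i\cdot(\alpha_i f)=0$ as a polynomial in $\mathbb{R}[x_1,\dots,x_n]$.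
   Context: Let $Q=\mathbb{R}[\partial_1,\dots,\partial_n]$ with $\partial_i=\partial/\partial x_i$, acting on $\mathbb{R}[x_1,\dots,x_n]$ by differentiation. For a homogeneous polynomial $f$ of degree $d$, $\operatorname{Ann}_Q(f)=\{\alpha\in Q\mid \alpha f=0\}$ and $A(f)=Q/\operatorname{Ann}_Q(f)$, a graded Artinian Gorenstein algebra with graded pieces $A_i$, $i=0,\dots,d$. For a set $B_k=\{\alpha_1,\dots,\alpha_m\}$ of homogeneous elements of degree $k$ of $Q$ and a polynomial $g$, the $k$-th Hessian matrix $\bm H_{B_k}(g)$ is the $m\times m$ polynomial matrix with $(i,j)$-entry $(\alpha_i\alpha_j)g$. *)

theory Defs
  imports "HOL-Analysis.Analysis" "HOL-Library.Poly_Mapping"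
begin

(* The same type represents both R[x_1..x_n] and Q = R[d_1..d_n]
  (variable i stands for x_(i+1), resp. d_(i+1)). *)
type_synonym mpoly = "(nat \<Rightarrow>\<^sub>0 nat) \<Rightarrow>\<^sub>0 real"

definition mdeg :: "(nat \<Rightarrow>\<^sub>0 nat) \<Rightarrow> nat" where
  "mdeg m = (\<Sum>i\<in>Poly_Mapping.keys m. Poly_Mapping.lookup m i)"

definition in_vars :: "nat \<Rightarrow> mpoly \<Rightarrow> bool" where
  "in_vars n p \<longleftrightarrow> (\<forall>m\<in>Poly_Mapping.keys p. Poly_Mapping.keys m \<subseteq> {..<n})"

definition homog :: "nat \<Rightarrow> mpoly \<Rightarrow> bool" where
  "homog d p \<longleftrightarrow> (\<forall>m\<in>Poly_Mapping.keys p. mdeg m = d)"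

(* The action of a differential monomial d^b on a monomial x^g:
  d^b x^g = (prod_i g_i!/(g_i-b_i)!) x^(g-b) if b \<le> g, else 0. *)
definition dmono :: "(nat \<Rightarrow>\<^sub>0 nat) \<Rightarrow> (nat \<Rightarrow>\<^sub>0 nat) \<Rightarrow> mpoly" where
  "dmono b g = (if (\<forall>i. Poly_Mapping.lookup b i \<le> Poly_Mapping.lookup g i)
     then Poly_Mapping.single (g - b) (\<Prod>i\<in>Poly_Mapping.keys b. real (fact (Poly_Mapping.lookup g i)) / real (fact (Poly_Mapping.lookup g i - Poly_Mapping.lookup b i)))
     else 0)"

definition dact :: "mpoly \<Rightarrow> mpoly \<Rightarrow> mpoly" where
  "dact \<alpha> g = (\<Sum>b\<in>Poly_Mapping.keys \<alpha>. \<Sum>c\<in>Poly_Mapping.keys g. Poly_Mapping.single 0 (Poly_Mapping.lookup \<alpha> b * Poly_Mapping.lookup g c) * dmono b c)"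

definition eval_mp :: "(nat \<Rightarrow> real) \<Rightarrow> mpoly \<Rightarrow> real" where
  "eval_mp a p = (\<Sum>g\<in>Poly_Mapping.keys p. Poly_Mapping.lookup p g * (\<Prod>i\<in>Poly_Mapping.keys g. a i ^ Poly_Mapping.lookup g i))"

end

theory Submission
  imports Defs
begin

lemma lookup_smult: "Poly_Mapping.lookup (Poly_Mapping.single 0 r * (p::mpoly)) k = r * Poly_Mapping.lookup p k"
  by (simp add: mult_map_scale_conv_mult[symmetric] map.rep_eq when_def)

lemma mpoly_repr: "(p::mpoly) = (\<Sum>c\<in>Poly_Mapping.keys p. Poly_Mapping.single c (Poly_Mapping.lookup p c))"
  apply (rule poly_mapping_eqI)
  apply (simp add: lookup_sum lookup_single when_def)
  by (metis (mono_tags, lifting) in_keys_iff)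

lemma mpoly_induct[case_names zero single add]:
  assumes "P 0" "\<And>c v. P (Poly_Mapping.single c v)" "\<And>p q. P p \<Longrightarrow> P q \<Longrightarrow> P (p + q)"
  shows "P (p::mpoly)"
proof -
  have "\<And>S. finite S \<Longrightarrow> P (\<Sum>c\<in>S. Poly_Mapping.single c (Poly_Mapping.lookup p c))"
  proof -
    fix S :: "(nat \<Rightarrow>\<^sub>0 nat) set" assume "finite S"
    then show "P (\<Sum>c\<in>S. Poly_Mapping.single c (Poly_Mapping.lookup p c))"
      by (induction S rule: finite_induct) (auto intro: assms)
  qed
  then show ?thesis using mpoly_repr[of p] by (metis finite_keys)
qed

lemma dact_superset:
  assumes "finite B" "Poly_Mapping.keys \<alpha> \<subseteq> B" "finite C" "Poly_Mapping.keys g \<subseteq> C"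
  shows "dact \<alpha> g = (\<Sum>b\<in>B. \<Sum>c\<in>C. Poly_Mapping.single 0 (Poly_Mapping.lookup \<alpha> b * Poly_Mapping.lookup g c) * dmono b c)"
proof -
  have "dact \<alpha> g = (\<Sum>b\<in>B. \<Sum>c\<in>Poly_Mapping.keys g. Poly_Mapping.single 0 (Poly_Mapping.lookup \<alpha> b * Poly_Mapping.lookup g c) * dmono b c)"
    unfolding dact_def by (rule sum.mono_neutral_left) (auto simp: assms in_keys_iff)
  also have "\<dots> = (\<Sum>b\<in>B. \<Sum>c\<in>C. Poly_Mapping.single 0 (Poly_Mapping.lookup \<alpha> b * Poly_Mapping.lookup g c) * dmono b c)"
    by (rule sum.cong[OF refl], rule sum.mono_neutral_left) (auto simp: assms in_keys_iff)
  finally show ?thesis .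
qed

lemma dact_add_left: "dact (\<alpha> + \<beta>) g = dact \<alpha> g + dact \<beta> g"
proof -
  let ?B = "Poly_Mapping.keys \<alpha> \<union> Poly_Mapping.keys \<beta> \<union> Poly_Mapping.keys (\<alpha> + \<beta>)"
  show ?thesis
    apply (subst (1 2 3) dact_superset[where B="?B" and C="Poly_Mapping.keys g"])
    by (auto simp: lookup_add distrib_right single_add sum.distrib)
qed

lemma dact_add_right: "dact \<alpha> (g + h) = dact \<alpha> g + dact \<alpha> h"
proof -
  let ?C = "Poly_Mapping.keys g \<union> Poly_Mapping.keys h \<union> Poly_Mapping.keys (g + h)"
  show ?thesis
    apply (subst (1 2 3) dact_superset[where C="?C" and B="Poly_Mapping.keys \<alpha>"])
    by (auto simp: lookup_add distrib_right distrib_left single_add sum.distrib)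
qed

lemma dact_zero_left[simp]: "dact 0 g = 0" by (simp add: dact_def)
lemma dact_zero_right[simp]: "dact \<alpha> 0 = 0" by (simp add: dact_def)

lemma smult_smult: "Poly_Mapping.single 0 r * (Poly_Mapping.single 0 s * (p::mpoly)) = Poly_Mapping.single 0 (r * s) * p"
  by (simp add: mult.assoc[symmetric] mult_single)

lemma dact_smult_left: "dact (Poly_Mapping.single 0 r * \<alpha>) g = Poly_Mapping.single 0 r * dact \<alpha> g"
proof -
  show ?thesis
    apply (subst (1 2) dact_superset[where B="Poly_Mapping.keys \<alpha>" and C="Poly_Mapping.keys g"])
    by (auto simp: lookup_smult in_keys_iff sum_distrib_left smult_smult mult.assoc)
qed

lemma dact_smult_right: "dact \<alpha> (Poly_Mapping.single 0 r * g) = Poly_Mapping.single 0 r * dact \<alpha> g"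
proof -
  show ?thesis
    apply (subst (1 2) dact_superset[where B="Poly_Mapping.keys \<alpha>" and C="Poly_Mapping.keys g"])
    by (auto simp: lookup_smult in_keys_iff sum_distrib_left smult_smult mult.assoc mult.left_commute)
qed

lemma dact_single_single: "dact (Poly_Mapping.single b u) (Poly_Mapping.single c v) = Poly_Mapping.single 0 (u * v) * dmono b c"
  by (subst dact_superset[where B="{b}" and C="{c}"]) auto

lemma dact_sum_left: "dact (\<Sum>i\<in>I. A i) g = (\<Sum>i\<in>I. dact (A i) g)"
  by (induction I rule: infinite_finite_induct) (auto simp: dact_add_left)

lemma dact_sum_right: "dact \<alpha> (\<Sum>i\<in>I. A i) = (\<Sum>i\<in>I. dact \<alpha> (A i))"
  by (induction I rule: infinite_finite_induct) (auto simp: dact_add_right)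

lemma dact_diff_left: "dact (\<alpha> - \<beta>) g = dact \<alpha> g - dact \<beta> g"
  by (metis add_diff_cancel_right' dact_add_left diff_add_cancel)

lemma dact_diff_right: "dact \<alpha> (g - h) = dact \<alpha> g - dact \<alpha> h"
  by (metis add_diff_cancel_right' dact_add_right diff_add_cancel)


lemma dmono_prod_superset:
  assumes "finite S" "Poly_Mapping.keys b \<subseteq> S"
  shows "(\<Prod>i\<in>Poly_Mapping.keys b. real (fact (Poly_Mapping.lookup g i)) / real (fact (Poly_Mapping.lookup g i - Poly_Mapping.lookup b i)))
       = (\<Prod>i\<in>S. real (fact (Poly_Mapping.lookup g i)) / real (fact (Poly_Mapping.lookup g i - Poly_Mapping.lookup b i)))"
  by (rule prod.mono_neutral_left) (auto simp: assms in_keys_iff)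

lemma single_scale: "Poly_Mapping.single b u = Poly_Mapping.single 0 u * (Poly_Mapping.single b 1 :: mpoly)"
  by (simp add: mult_single)

lemma dmono_compose: "dact (Poly_Mapping.single b1 1) (dmono b2 c) = dmono (b1 + b2) c"
proof (cases "\<forall>i. Poly_Mapping.lookup b2 i \<le> Poly_Mapping.lookup c i")
  case False
  then have "\<not> (\<forall>i. Poly_Mapping.lookup (b1 + b2) i \<le> Poly_Mapping.lookup c i)"
    by (auto simp: lookup_add) (meson add_leD2)
  then have "dmono (b1 + b2) c = 0" by (simp only: dmono_def if_False)
  moreover have "dmono b2 c = 0" using False by (simp only: dmono_def if_False)
  ultimately show ?thesis by simp
next
  case le2: True
  define r2 where "r2 = (\<Prod>i\<in>Poly_Mapping.keys b2. real (fact (Poly_Mapping.lookup c i)) / real (fact (Poly_Mapping.lookup c i - Poly_Mapping.lookup b2 i)))"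
  have d2: "dmono b2 c = Poly_Mapping.single (c - b2) r2" using le2 by (simp add: dmono_def r2_def)
  have L: "dact (Poly_Mapping.single b1 1) (dmono b2 c) = Poly_Mapping.single 0 r2 * dmono b1 (c - b2)"
    by (simp add: d2 dact_single_single)
  show ?thesis
  proof (cases "\<forall>i. Poly_Mapping.lookup b1 i \<le> Poly_Mapping.lookup (c - b2) i")
    case False
    then have "\<not> (\<forall>i. Poly_Mapping.lookup (b1 + b2) i \<le> Poly_Mapping.lookup c i)"
      using le2 by (auto simp: lookup_add lookup_minus le_diff_conv2)
    then have "dmono (b1 + b2) c = 0" by (simp only: dmono_def if_False)
    moreover have "dmono b1 (c - b2) = 0" using False by (simp only: dmono_def if_False)
    ultimately show ?thesis using L by simp
  next
    case le1: True
    have le12: "\<forall>i. Poly_Mapping.lookup (b1 + b2) i \<le> Poly_Mapping.lookup c i"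
      using le1 le2 by (auto simp: lookup_add lookup_minus) (metis add.commute le_diff_conv2)
    have eqk: "c - b2 - b1 = c - (b1 + b2)"
      by (rule poly_mapping_eqI) (simp add: lookup_add lookup_minus)
    let ?S = "Poly_Mapping.keys b1 \<union> Poly_Mapping.keys b2"
    have fS: "finite ?S" by simp
    have k12: "Poly_Mapping.keys (b1 + b2) \<subseteq> ?S" by (rule keys_add)
    have "r2 * (\<Prod>i\<in>Poly_Mapping.keys b1. real (fact (Poly_Mapping.lookup (c - b2) i)) / real (fact (Poly_Mapping.lookup (c - b2) i - Poly_Mapping.lookup b1 i)))
        = (\<Prod>i\<in>Poly_Mapping.keys (b1 + b2). real (fact (Poly_Mapping.lookup c i)) / real (fact (Poly_Mapping.lookup c i - Poly_Mapping.lookup (b1 + b2) i)))"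
      unfolding r2_def
      apply (subst (1 2 3) dmono_prod_superset[OF fS])
      apply (auto simp: k12)[3]
      apply (subst prod.distrib[symmetric])
      apply (rule prod.cong[OF refl])
      apply (simp add: lookup_add lookup_minus diff_diff_add add.commute)
      done
    then show ?thesis using le1 le12 L eqk by (simp add: dmono_def mult_single)
  qed
qed

lemma dact_mult_single: "dact (Poly_Mapping.single b1 u * Poly_Mapping.single b2 w) (Poly_Mapping.single c v) =
   dact (Poly_Mapping.single b1 u) (dact (Poly_Mapping.single b2 w) (Poly_Mapping.single c v))"
proof -
  have "dact (Poly_Mapping.single b1 u) (dact (Poly_Mapping.single b2 w) (Poly_Mapping.single c v))
     = Poly_Mapping.single 0 (w * v) * (Poly_Mapping.single 0 u * dact (Poly_Mapping.single b1 1) (dmono b2 c))"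
    by (simp add: dact_single_single dact_smult_right dact_smult_left[symmetric] single_scale[symmetric])
  also have "\<dots> = Poly_Mapping.single 0 ((w * v) * u) * dmono (b1 + b2) c"
    by (simp only: dmono_compose smult_smult)
  also have "(w * v) * u = u * w * v" by simp
  finally have 1: "dact (Poly_Mapping.single b1 u) (dact (Poly_Mapping.single b2 w) (Poly_Mapping.single c v)) = Poly_Mapping.single 0 (u * w * v) * dmono (b1 + b2) c" .
  moreover have "dact (Poly_Mapping.single b1 u * Poly_Mapping.single b2 w) (Poly_Mapping.single c v) = Poly_Mapping.single 0 (u * w * v) * dmono (b1 + b2) c"
    by (simp add: mult_single dact_single_single)
  ultimately show ?thesis by simp
qed

lemma dact_mult: "dact (\<alpha> * \<beta>) g = dact \<alpha> (dact \<beta> g)"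
proof (induction \<alpha> rule: mpoly_induct)
  case (single b1 u)
  show ?case
  proof (induction \<beta> rule: mpoly_induct)
    case (single b2 w)
    show ?case
    proof (induction g rule: mpoly_induct)
      case (single c v)
      then show ?case by (rule dact_mult_single)
    qed (simp_all add: dact_add_right)
  qed (simp_all add: dact_add_right dact_add_left distrib_left)
qed (simp_all add: dact_add_left distrib_right)

lemma dact_one[simp]: "dact 1 g = g"
proof (induction g rule: mpoly_induct)
  case (single c v)
  have "dmono 0 c = Poly_Mapping.single c 1" by (simp add: dmono_def)
  then show ?case by (simp add: single_one[symmetric] dact_single_single del: single_one) (simp add: mult_single)
qed (simp_all add: dact_add_right)


definition mmono :: "(nat \<Rightarrow> real) \<Rightarrow> (nat \<Rightarrow>\<^sub>0 nat) \<Rightarrow> real" where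
  "mmono a g = (\<Prod>i\<in>Poly_Mapping.keys g. a i ^ Poly_Mapping.lookup g i)"

lemma mmono_superset: "finite S \<Longrightarrow> Poly_Mapping.keys g \<subseteq> S \<Longrightarrow> mmono a g = (\<Prod>i\<in>S. a i ^ Poly_Mapping.lookup g i)"
  unfolding mmono_def by (rule prod.mono_neutral_left) (auto simp: in_keys_iff)

lemma mmono_add: "mmono a (g + h) = mmono a g * mmono a h"
proof -
  let ?S = "Poly_Mapping.keys g \<union> Poly_Mapping.keys h"
  have "Poly_Mapping.keys (g + h) \<subseteq> ?S" by (rule keys_add)
  then show ?thesis
    by (subst (1 2 3) mmono_superset[of ?S]) (auto simp: lookup_add power_add prod.distrib)
qed

lemma mmono_zero[simp]: "mmono a 0 = 1" by (simp add: mmono_def)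

lemma eval_def2: "eval_mp a p = (\<Sum>g\<in>Poly_Mapping.keys p. Poly_Mapping.lookup p g * mmono a g)"
  by (simp add: eval_mp_def mmono_def)

lemma eval_superset: "finite C \<Longrightarrow> Poly_Mapping.keys p \<subseteq> C \<Longrightarrow> eval_mp a p = (\<Sum>g\<in>C. Poly_Mapping.lookup p g * mmono a g)"
  unfolding eval_def2 by (rule sum.mono_neutral_left) (auto simp: in_keys_iff)

lemma eval_add: "eval_mp a (p + q) = eval_mp a p + eval_mp a q"
proof -
  let ?C = "Poly_Mapping.keys p \<union> Poly_Mapping.keys q"
  have "Poly_Mapping.keys (p + q) \<subseteq> ?C" by (rule keys_add)
  then show ?thesis
    by (subst (1 2 3) eval_superset[of ?C]) (auto simp: lookup_add distrib_right sum.distrib)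
qed

lemma eval_zero[simp]: "eval_mp a 0 = 0" by (simp add: eval_mp_def)

lemma eval_single[simp]: "eval_mp a (Poly_Mapping.single c v) = v * mmono a c"
  by (subst eval_superset[of "{c}"]) auto

lemma eval_smult: "eval_mp a (Poly_Mapping.single 0 r * p) = r * eval_mp a p"
  by (subst (1 2) eval_superset[of "Poly_Mapping.keys p"]) (auto simp: lookup_smult in_keys_iff sum_distrib_left mult.assoc)

lemma eval_mult: "eval_mp a (p * q) = eval_mp a p * eval_mp a q"
proof (induction p rule: mpoly_induct)
  case (single c v)
  show ?case
    by (induction q rule: mpoly_induct) (simp_all add: mult_single mmono_add eval_add distrib_left)
qed (simp_all add: distrib_right eval_add)

lemma eval_sum: "eval_mp a (\<Sum>i\<in>I. A i) = (\<Sum>i\<in>I. eval_mp a (A i))"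
  by (induction I rule: infinite_finite_induct) (auto simp: eval_add)

lemma eval_diff: "eval_mp a (p - q) = eval_mp a p - eval_mp a q"
  by (metis add_diff_cancel_right' eval_add diff_add_cancel)

lemma eval_one[simp]: "eval_mp a 1 = 1"
  by (simp add: single_one[symmetric] del: single_one)

lemma eval_at_zero: "eval_mp (\<lambda>_. 0) p = Poly_Mapping.lookup p 0"
proof -
  have m: "mmono (\<lambda>_. 0) g = (if g = 0 then 1 else 0)" for g
  proof (cases "g = 0")
    case False
    then obtain i where "i \<in> Poly_Mapping.keys g" by (metis keys_eq_empty equals0I)
    then show ?thesis unfolding mmono_def using False
      by (intro prod_zero[THEN trans]) (auto simp: in_keys_iff)
  qed simp
  show ?thesis
    by (subst eval_superset[of "insert 0 (Poly_Mapping.keys p)"]) (auto simp: m if_distrib cong: if_cong)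
qed


lemma mdeg_superset: "finite S \<Longrightarrow> Poly_Mapping.keys m \<subseteq> S \<Longrightarrow> mdeg m = (\<Sum>i\<in>S. Poly_Mapping.lookup m i)"
  unfolding mdeg_def by (rule sum.mono_neutral_left) (auto simp: in_keys_iff)

lemma mdeg_add: "mdeg (g + h) = mdeg g + mdeg h"
proof -
  let ?S = "Poly_Mapping.keys g \<union> Poly_Mapping.keys h"
  have "Poly_Mapping.keys (g + h) \<subseteq> ?S" by (rule keys_add)
  then show ?thesis
    by (subst (1 2 3) mdeg_superset[of ?S]) (auto simp: lookup_add sum.distrib)
qed

lemma mdeg_zero[simp]: "mdeg 0 = 0" by (simp add: mdeg_def)

lemma mdeg_single: "mdeg (Poly_Mapping.single i j) = j"
  by (subst mdeg_superset[of "{i}"]) auto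

lemma keys_smult: "Poly_Mapping.keys (Poly_Mapping.single 0 r * (p::mpoly)) \<subseteq> Poly_Mapping.keys p"
  by (auto simp: in_keys_iff lookup_smult)

lemma keys_dmono: "m \<in> Poly_Mapping.keys (dmono b c) \<Longrightarrow> (\<forall>i. Poly_Mapping.lookup b i \<le> Poly_Mapping.lookup c i) \<and> m = c - b"
  by (auto simp: dmono_def split: if_splits)

lemma keys_dact: "m \<in> Poly_Mapping.keys (dact \<alpha> g) \<Longrightarrow>
   \<exists>b\<in>Poly_Mapping.keys \<alpha>. \<exists>c\<in>Poly_Mapping.keys g. (\<forall>i. Poly_Mapping.lookup b i \<le> Poly_Mapping.lookup c i) \<and> m = c - b"
proof -
  define T where "T b c = Poly_Mapping.single 0 (Poly_Mapping.lookup \<alpha> b * Poly_Mapping.lookup g c) * dmono b c" for b c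
  assume "m \<in> Poly_Mapping.keys (dact \<alpha> g)"
  then have "m \<in> Poly_Mapping.keys (\<Sum>b\<in>Poly_Mapping.keys \<alpha>. (\<Sum>c\<in>Poly_Mapping.keys g. T b c))"
    unfolding dact_def T_def .
  then obtain b where b: "b \<in> Poly_Mapping.keys \<alpha>" "m \<in> Poly_Mapping.keys (\<Sum>c\<in>Poly_Mapping.keys g. T b c)"
    using keys_sum[of "\<lambda>b. \<Sum>c\<in>Poly_Mapping.keys g. T b c" "Poly_Mapping.keys \<alpha>"] by blast
  then obtain c where c: "c \<in> Poly_Mapping.keys g" "m \<in> Poly_Mapping.keys (T b c)"
    using keys_sum[of "\<lambda>c. T b c" "Poly_Mapping.keys g"] by blast
  then have "m \<in> Poly_Mapping.keys (dmono b c)" unfolding T_def using keys_smult by blast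
  then show ?thesis using b(1) c(1) keys_dmono by blast
qed

lemma homog_add: "homog d p \<Longrightarrow> homog d q \<Longrightarrow> homog d (p + q)"
  unfolding homog_def using keys_add[of p q] by blast
lemma homog_zero[simp]: "homog d 0" unfolding homog_def by simp
lemma homog_smult: "homog d p \<Longrightarrow> homog d (Poly_Mapping.single 0 r * p)"
  unfolding homog_def using keys_smult[of r p] by blast
lemma homog_sum: "(\<And>i. i \<in> I \<Longrightarrow> homog d (A i)) \<Longrightarrow> homog d (\<Sum>i\<in>I. A i)"
  unfolding homog_def using keys_sum[of A I] by blast
lemma homog_diff: "homog d p \<Longrightarrow> homog d q \<Longrightarrow> homog d (p - q)"
  unfolding homog_def using keys_diff[of p q] by blast
lemma homog_single: "homog (mdeg c) (Poly_Mapping.single c v)"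
  unfolding homog_def by simp
lemma homog_mult: "homog a p \<Longrightarrow> homog b q \<Longrightarrow> homog (a + b) (p * q)"
proof -
  assume a: "homog a p" and b: "homog b q"
  show ?thesis unfolding homog_def
  proof
    fix m assume "m \<in> Poly_Mapping.keys (p * q)"
    then obtain x y where "x \<in> Poly_Mapping.keys p" "y \<in> Poly_Mapping.keys q" "m = x + y"
      using keys_mult[of p q] by blast
    then show "mdeg m = a + b" using a b unfolding homog_def by (simp add: mdeg_add)
  qed
qed
lemma homog_one: "homog 0 1"
  unfolding homog_def by simp
lemma homog_pow: "homog a p \<Longrightarrow> homog (j * a) (p ^ j)"
proof (induction j)
  case 0 then show ?case by (simp add: homog_one)
next
  case (Suc j)
  then have "homog (a + j * a) (p * p ^ j)" using homog_mult by blast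
  then show ?case by simp
qed

lemma mdeg_diff: "(\<forall>i. Poly_Mapping.lookup b i \<le> Poly_Mapping.lookup c i) \<Longrightarrow> mdeg (c - b) = mdeg c - mdeg b"
proof -
  assume le: "\<forall>i. Poly_Mapping.lookup b i \<le> Poly_Mapping.lookup c i"
  have "(c - b) + b = c" by (rule poly_mapping_eqI) (simp add: lookup_add lookup_minus le)
  then have "mdeg (c - b) + mdeg b = mdeg c" by (metis mdeg_add)
  then show ?thesis by simp
qed

lemma homog_dact: "homog a \<alpha> \<Longrightarrow> homog b g \<Longrightarrow> homog (b - a) (dact \<alpha> g)"
proof -
  assume a: "homog a \<alpha>" and b: "homog b g"
  show ?thesis unfolding homog_def
  proof
    fix m assume "m \<in> Poly_Mapping.keys (dact \<alpha> g)"
    then obtain bb c where "bb \<in> Poly_Mapping.keys \<alpha>" "c \<in> Poly_Mapping.keys g" "\<forall>i. Poly_Mapping.lookup bb i \<le> Poly_Mapping.lookup c i" "m = c - bb"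
      using keys_dact by blast
    then show "mdeg m = b - a" using a b mdeg_diff unfolding homog_def by simp
  qed
qed

lemma in_vars_add: "in_vars n p \<Longrightarrow> in_vars n q \<Longrightarrow> in_vars n (p + q)"
  unfolding in_vars_def using keys_add[of p q] by blast
lemma in_vars_zero[simp]: "in_vars n 0" unfolding in_vars_def by simp
lemma in_vars_smult: "in_vars n p \<Longrightarrow> in_vars n (Poly_Mapping.single 0 r * p)"
  unfolding in_vars_def using keys_smult[of r p] by blast
lemma in_vars_sum: "(\<And>i. i \<in> I \<Longrightarrow> in_vars n (A i)) \<Longrightarrow> in_vars n (\<Sum>i\<in>I. A i)"
  unfolding in_vars_def using keys_sum[of A I] by blast
lemma in_vars_diff: "in_vars n p \<Longrightarrow> in_vars n q \<Longrightarrow> in_vars n (p - q)"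
  unfolding in_vars_def using keys_diff[of p q] by blast
lemma in_vars_single: "Poly_Mapping.keys c \<subseteq> {..<n} \<Longrightarrow> in_vars n (Poly_Mapping.single c v)"
  unfolding in_vars_def by simp
lemma keys_add_nat: "Poly_Mapping.keys ((g::nat \<Rightarrow>\<^sub>0 nat) + h) = Poly_Mapping.keys g \<union> Poly_Mapping.keys h"
  by (auto simp: in_keys_iff lookup_add)
lemma in_vars_mult: "in_vars n p \<Longrightarrow> in_vars n q \<Longrightarrow> in_vars n (p * q)"
proof -
  assume a: "in_vars n p" and b: "in_vars n q"
  show ?thesis unfolding in_vars_def
  proof
    fix m assume "m \<in> Poly_Mapping.keys (p * q)"
    then obtain x y where "x \<in> Poly_Mapping.keys p" "y \<in> Poly_Mapping.keys q" "m = x + y"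
      using keys_mult[of p q] by blast
    then show "Poly_Mapping.keys m \<subseteq> {..<n}" using a b unfolding in_vars_def by (simp add: keys_add_nat)
  qed
qed
lemma in_vars_one: "in_vars n 1"
  unfolding in_vars_def by simp
lemma in_vars_pow: "in_vars n p \<Longrightarrow> in_vars n (p ^ j)"
  by (induction j) (auto simp: in_vars_one in_vars_mult)
lemma in_vars_dact: "in_vars n g \<Longrightarrow> in_vars n (dact \<alpha> g)"
proof -
  assume g: "in_vars n g"
  have "Poly_Mapping.keys (c - b) \<subseteq> Poly_Mapping.keys c" for c b :: "nat \<Rightarrow>\<^sub>0 nat"
    by (auto simp: in_keys_iff lookup_minus)
  then show ?thesis using g keys_dact unfolding in_vars_def by blast
qed


lemma lookup_dmono_zero: "Poly_Mapping.lookup (dmono c c') 0 = (if c = c' then (\<Prod>i\<in>Poly_Mapping.keys c. real (fact (Poly_Mapping.lookup c i))) else 0)"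
proof (cases "\<forall>i. Poly_Mapping.lookup c i \<le> Poly_Mapping.lookup c' i")
  case True
  have iff: "c' - c = 0 \<longleftrightarrow> c = c'"
  proof
    assume "c' - c = 0"
    then have "\<forall>i. Poly_Mapping.lookup c' i - Poly_Mapping.lookup c i = 0"
      by (metis lookup_minus lookup_zero)
    then show "c = c'" using True by (intro poly_mapping_eqI) (metis diff_is_0_eq le_antisym)
  qed simp
  show ?thesis using True by (auto simp: dmono_def lookup_single when_def iff)
next
  case False
  then have "c \<noteq> c'" by auto
  moreover have "dmono c c' = 0" using False by (simp only: dmono_def if_False)
  ultimately show ?thesis by simp
qed

lemma dact_mono_lookup0: "Poly_Mapping.lookup (dact (Poly_Mapping.single c 1) g) 0 = Poly_Mapping.lookup g c * (\<Prod>i\<in>Poly_Mapping.keys c. real (fact (Poly_Mapping.lookup c i)))"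
proof -
  have "dact (Poly_Mapping.single c 1) g = (\<Sum>c'\<in>insert c (Poly_Mapping.keys g). Poly_Mapping.single 0 (Poly_Mapping.lookup g c') * dmono c c')"
    by (subst dact_superset[where B="{c}" and C="insert c (Poly_Mapping.keys g)"]) auto
  then show ?thesis
    by (simp add: lookup_sum lookup_smult lookup_dmono_zero if_distrib cong: if_cong)
qed

lemma prod_fact_nonzero: "(\<Prod>i\<in>Poly_Mapping.keys c. real (fact (Poly_Mapping.lookup c i))) \<noteq> 0"
  by simp

lemma zero_by_derivs:
  assumes "\<And>c. Poly_Mapping.keys c \<subseteq> {..<n} \<Longrightarrow> mdeg c = k \<Longrightarrow> dact (Poly_Mapping.single c 1) g = 0"
    and "homog k g" and "in_vars n g"
  shows "g = 0"
proof (rule ccontr)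
  assume "g \<noteq> 0"
  then obtain c where c: "c \<in> Poly_Mapping.keys g" by (metis keys_eq_empty equals0I)
  then have "dact (Poly_Mapping.single c 1) g = 0" using assms unfolding homog_def in_vars_def by blast
  then have "Poly_Mapping.lookup g c * (\<Prod>i\<in>Poly_Mapping.keys c. real (fact (Poly_Mapping.lookup c i))) = 0"
    by (metis dact_mono_lookup0 lookup_zero)
  then show False using c prod_fact_nonzero by (simp add: in_keys_iff)
qed

definition lv :: "(nat \<Rightarrow> real) \<Rightarrow> nat \<Rightarrow> mpoly" where
  "lv a n = (\<Sum>i<n. Poly_Mapping.single (Poly_Mapping.single i 1) (a i))"

lemma homog_lv: "homog 1 (lv a n)"
proof -
  have "homog 1 (Poly_Mapping.single (Poly_Mapping.single i 1) (a i))" for i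
    using homog_single[of "Poly_Mapping.single i 1" "a i"] by (simp only: mdeg_single)
  then show ?thesis unfolding lv_def by (intro homog_sum)
qed

lemma dmono_unit: "dmono (Poly_Mapping.single i 1) c = (if 1 \<le> Poly_Mapping.lookup c i then Poly_Mapping.single (c - Poly_Mapping.single i 1) (real (Poly_Mapping.lookup c i)) else 0)"
proof -
  have iff: "(\<forall>j. Poly_Mapping.lookup (Poly_Mapping.single i (1::nat)) j \<le> Poly_Mapping.lookup c j) \<longleftrightarrow> 1 \<le> Poly_Mapping.lookup c i"
    by (auto simp: lookup_single when_def)
  have r: "1 \<le> Poly_Mapping.lookup c i \<Longrightarrow> real (fact (Poly_Mapping.lookup c i)) / real (fact (Poly_Mapping.lookup c i - 1)) = real (Poly_Mapping.lookup c i)"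
  proof -
    assume "1 \<le> Poly_Mapping.lookup c i"
    then have "fact (Poly_Mapping.lookup c i) = (Poly_Mapping.lookup c i) * fact (Poly_Mapping.lookup c i - 1)"
      by (simp add: fact_reduce)
    then show ?thesis by simp
  qed
  show ?thesis unfolding dmono_def iff using r by simp
qed

lemma mmono_single: "mmono a (Poly_Mapping.single i 1) = a i"
  by (simp add: mmono_def)

lemma mmono_unit: "1 \<le> Poly_Mapping.lookup c i \<Longrightarrow> a i * mmono a (c - Poly_Mapping.single i 1) = mmono a c"
proof -
  assume h: "1 \<le> Poly_Mapping.lookup c i"
  have "(c - Poly_Mapping.single i 1) + Poly_Mapping.single i 1 = c"
    by (rule poly_mapping_eqI) (use h in \<open>auto simp: lookup_add lookup_minus lookup_single when_def\<close>)
  then have "mmono a c = mmono a (c - Poly_Mapping.single i 1) * a i"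
    by (metis mmono_add mmono_single)
  then show ?thesis by simp
qed

lemma euler_mono:
  assumes "Poly_Mapping.keys c \<subseteq> {..<n}"
  shows "eval_mp a (dact (lv a n) (Poly_Mapping.single c 1)) = real (mdeg c) * mmono a c"
proof -
  have "eval_mp a (dact (lv a n) (Poly_Mapping.single c 1)) = (\<Sum>i<n. a i * eval_mp a (dmono (Poly_Mapping.single i 1) c))"
    by (simp add: lv_def dact_sum_left dact_single_single eval_sum eval_smult)
  also have "\<dots> = (\<Sum>i<n. real (Poly_Mapping.lookup c i) * mmono a c)"
  proof (rule sum.cong[OF refl])
    fix i
    show "a i * eval_mp a (dmono (Poly_Mapping.single i 1) c) = real (Poly_Mapping.lookup c i) * mmono a c"
    proof (cases "1 \<le> Poly_Mapping.lookup c i")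
      case True
      have "eval_mp a (dmono (Poly_Mapping.single i 1) c) = real (Poly_Mapping.lookup c i) * mmono a (c - Poly_Mapping.single i 1)"
        unfolding dmono_unit if_P[OF True] eval_single by simp
      then show ?thesis using mmono_unit[OF True, of a] by (simp add: algebra_simps)
    next
      case False
      then have "Poly_Mapping.lookup c i = 0" by simp
      then show ?thesis unfolding dmono_unit if_not_P[OF False] by simp
    qed
  qed
  also have "\<dots> = real (mdeg c) * mmono a c"
    by (simp add: mdeg_superset[OF _ assms] sum_distrib_right)
  finally show ?thesis .
qed

lemma euler:
  assumes "in_vars n g" "homog e g"
  shows "eval_mp a (dact (lv a n) g) = real e * eval_mp a g"
proof -
  have g: "g = (\<Sum>c\<in>Poly_Mapping.keys g. Poly_Mapping.single 0 (Poly_Mapping.lookup g c) * Poly_Mapping.single c 1)"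
    by (subst mpoly_repr) (simp add: mult_single)
  have "eval_mp a (dact (lv a n) g) = (\<Sum>c\<in>Poly_Mapping.keys g. Poly_Mapping.lookup g c * eval_mp a (dact (lv a n) (Poly_Mapping.single c 1)))"
    by (subst g) (simp add: dact_sum_right dact_smult_right eval_sum eval_smult)
  also have "\<dots> = (\<Sum>c\<in>Poly_Mapping.keys g. Poly_Mapping.lookup g c * (real e * mmono a c))"
  proof (rule sum.cong[OF refl])
    fix c assume c: "c \<in> Poly_Mapping.keys g"
    then have "Poly_Mapping.keys c \<subseteq> {..<n}" "mdeg c = e" using assms unfolding in_vars_def homog_def by auto
    then show "Poly_Mapping.lookup g c * eval_mp a (dact (lv a n) (Poly_Mapping.single c 1)) = Poly_Mapping.lookup g c * (real e * mmono a c)"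
      using euler_mono by simp
  qed
  also have "\<dots> = real e * eval_mp a g"
    by (simp add: eval_def2 sum_distrib_left mult_ac)
  finally show ?thesis .
qed

lemma homog0_const: "homog 0 g \<Longrightarrow> g = Poly_Mapping.single 0 (eval_mp a g)"
proof -
  assume h: "homog 0 g"
  have k: "Poly_Mapping.keys g \<subseteq> {0}"
  proof
    fix m assume "m \<in> Poly_Mapping.keys g"
    then have "mdeg m = 0" using h by (simp add: homog_def)
    then have "\<forall>i\<in>Poly_Mapping.keys m. Poly_Mapping.lookup m i = 0" unfolding mdeg_def
      by (simp add: sum_eq_0_iff)
    then have "m = 0" by (metis in_keys_iff lookup_zero poly_mapping_eqI)
    then show "m \<in> {0}" by simp
  qed
  then have "eval_mp a g = Poly_Mapping.lookup g 0" by (subst eval_superset[of "{0}"]) auto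
  moreover have "g = Poly_Mapping.single 0 (Poly_Mapping.lookup g 0)"
    using k by (intro poly_mapping_eqI) (auto simp: lookup_single when_def in_keys_iff)
  ultimately show ?thesis by simp
qed

lemma dact_lpow:
  assumes "in_vars n g" "homog e g"
  shows "dact (lv a n ^ e) g = Poly_Mapping.single 0 (fact e * eval_mp a g)"
  using assms
proof (induction e arbitrary: g)
  case 0
  then show ?case using homog0_const[OF "0.prems"(2), of a] by simp
next
  case (Suc e)
  have h: "homog e (dact (lv a n) g)" using homog_dact[OF homog_lv Suc.prems(2)] by simp
  have v: "in_vars n (dact (lv a n) g)" using in_vars_dact Suc.prems(1) by blast
  have "dact (lv a n ^ Suc e) g = dact (lv a n ^ e) (dact (lv a n) g)"
    by (simp only: power_Suc2 dact_mult)
  also have "\<dots> = Poly_Mapping.single 0 (fact e * eval_mp a (dact (lv a n) g))" using Suc.IH[OF v h] .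
  also have "\<dots> = Poly_Mapping.single 0 (fact (Suc e) * eval_mp a g)"
    using euler[OF Suc.prems] by (simp add: algebra_simps)
  finally show ?case .
qed


lemma deriv_mono:
  "((\<lambda>s. mmono (a(i:=s)) c) has_real_derivative eval_mp (a(i:=t)) (dmono (Poly_Mapping.single i 1) c)) (at t)"
proof (cases "1 \<le> Poly_Mapping.lookup c i")
  case True
  then have ik: "i \<in> Poly_Mapping.keys c" by (simp add: in_keys_iff)
  define R where "R = (\<Prod>j\<in>Poly_Mapping.keys c - {i}. a j ^ Poly_Mapping.lookup c j)"
  define k where "k = Poly_Mapping.lookup c i"
  have f: "mmono (a(i:=s)) c = s ^ k * R" for s
    unfolding mmono_def R_def k_def
    by (subst prod.remove[OF finite_keys ik]) (auto intro!: prod.cong)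
  have kc: "Poly_Mapping.keys (c - Poly_Mapping.single i 1) \<subseteq> Poly_Mapping.keys c"
    by (auto simp: in_keys_iff lookup_minus)
  have g: "mmono (a(i:=t)) (c - Poly_Mapping.single i 1) = t ^ (k - 1) * R"
    unfolding R_def k_def
    by (subst mmono_superset[OF finite_keys kc], subst prod.remove[OF finite_keys ik])
       (auto simp: lookup_minus lookup_single when_def intro!: prod.cong)
  have e: "eval_mp (a(i:=t)) (dmono (Poly_Mapping.single i 1) c) = real k * t ^ (k - 1) * R"
    unfolding dmono_unit if_P[OF True] eval_single g k_def by simp
  have "((\<lambda>s. s ^ k * R) has_real_derivative real k * t ^ (k - 1) * R) (at t)"
    using DERIV_pow[of k t UNIV] by (intro DERIV_cmult_right) simp
  then show ?thesis unfolding f e .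
next
  case False
  then have ik: "i \<notin> Poly_Mapping.keys c" by (simp add: in_keys_iff)
  have f: "mmono (a(i:=s)) c = mmono a c" for s
    unfolding mmono_def using ik by (intro prod.cong) auto
  have e: "eval_mp (a(i:=t)) (dmono (Poly_Mapping.single i 1) c) = 0"
    unfolding dmono_unit if_not_P[OF False] by simp
  show ?thesis unfolding f e by simp
qed

lemma deriv_eval:
  "((\<lambda>s. eval_mp (a(i:=s)) P) has_real_derivative eval_mp (a(i:=t)) (dact (Poly_Mapping.single (Poly_Mapping.single i 1) 1) P)) (at t)"
proof -
  have d: "dact (Poly_Mapping.single (Poly_Mapping.single i 1) 1) P = (\<Sum>c\<in>Poly_Mapping.keys P. Poly_Mapping.single 0 (Poly_Mapping.lookup P c) * dmono (Poly_Mapping.single i 1) c)"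
    by (subst dact_superset[where B="{Poly_Mapping.single i 1}" and C="Poly_Mapping.keys P"]) auto
  have "((\<lambda>s. \<Sum>c\<in>Poly_Mapping.keys P. Poly_Mapping.lookup P c * mmono (a(i:=s)) c) has_real_derivative
      (\<Sum>c\<in>Poly_Mapping.keys P. Poly_Mapping.lookup P c * eval_mp (a(i:=t)) (dmono (Poly_Mapping.single i 1) c))) (at t)"
    by (intro DERIV_sum DERIV_cmult deriv_mono)
  then show ?thesis unfolding eval_def2[symmetric] d eval_sum eval_smult .
qed

lemma eval_deriv_zero:
  assumes "\<forall>a. eval_mp a P = 0"
  shows "eval_mp a (dact (Poly_Mapping.single (Poly_Mapping.single i 1) 1) P) = 0"
proof -
  have "((\<lambda>s. eval_mp (a(i:=s)) P) has_real_derivative eval_mp (a(i:=a i)) (dact (Poly_Mapping.single (Poly_Mapping.single i 1) 1) P)) (at (a i))"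
    by (rule deriv_eval)
  moreover have "(\<lambda>s. eval_mp (a(i:=s)) P) = (\<lambda>s. 0)" using assms by simp
  ultimately have "((\<lambda>s. 0) has_real_derivative eval_mp a (dact (Poly_Mapping.single (Poly_Mapping.single i 1) 1) P)) (at (a i))"
    by simp
  then show ?thesis using DERIV_const DERIV_unique by metis
qed

lemma eval_derivs_zero:
  assumes "\<forall>a. eval_mp a P = 0"
  shows "\<forall>a. eval_mp a (dact (Poly_Mapping.single c 1) P) = 0"
proof (induction "mdeg c" arbitrary: c rule: less_induct)
  case less
  show ?case
  proof (cases "c = 0")
    case True
    have "Poly_Mapping.single 0 1 = (1::mpoly)" by simp
    then show ?thesis using assms True by simp
  next
    case False
    then obtain i where ik: "i \<in> Poly_Mapping.keys c" by (metis keys_eq_empty equals0I)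
    define c' where "c' = c - Poly_Mapping.single i 1"
    have cc: "Poly_Mapping.single i 1 + c' = c" unfolding c'_def
      by (rule poly_mapping_eqI) (use ik in \<open>auto simp: lookup_add lookup_minus lookup_single when_def in_keys_iff\<close>)
    then have "mdeg c = 1 + mdeg c'" by (metis mdeg_add mdeg_single)
    then have "\<forall>a. eval_mp a (dact (Poly_Mapping.single c' 1) P) = 0" using less by simp
    then have "\<forall>a. eval_mp a (dact (Poly_Mapping.single (Poly_Mapping.single i 1) 1) (dact (Poly_Mapping.single c' 1) P)) = 0"
      using eval_deriv_zero by blast
    moreover have "Poly_Mapping.single c 1 = Poly_Mapping.single (Poly_Mapping.single i 1) 1 * (Poly_Mapping.single c' 1 :: mpoly)"
      using cc by (simp add: mult_single)
    ultimately show ?thesis by (simp add: dact_mult)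
  qed
qed

lemma identity_thm:
  assumes "\<forall>a. eval_mp a P = 0"
  shows "P = 0"
proof (rule poly_mapping_eqI)
  fix c
  have "Poly_Mapping.lookup P c * (\<Prod>i\<in>Poly_Mapping.keys c. real (fact (Poly_Mapping.lookup c i))) = 0"
    using eval_derivs_zero[OF assms, of c] by (metis dact_mono_lookup0 eval_at_zero)
  then show "Poly_Mapping.lookup P c = Poly_Mapping.lookup 0 c" using prod_fact_nonzero by simp
qed


lemma eval_smult_sum: "eval_mp a (\<Sum>i<m. Poly_Mapping.single 0 (r i) * A i) = (\<Sum>i<m. r i * eval_mp a (A i))"
  by (simp add: eval_sum eval_smult)

lemma part1:
  fixes n d k m :: nat and f :: mpoly and \<alpha> F :: "nat \<Rightarrow> mpoly" and a :: "nat \<Rightarrow> real"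
  assumes f_vars: "in_vars n f"
    and f_homog: "homog d f"
    and k_le: "k \<le> d div 2"
    and \<alpha>_homog: "\<forall>i<m. homog k (\<alpha> i)"
    and \<alpha>_span: "\<forall>\<beta>. in_vars n \<beta> \<and> homog k \<beta> \<longrightarrow>
        (\<exists>c :: nat \<Rightarrow> real. dact (\<beta> - (\<Sum>i<m. Poly_Mapping.single 0 (c i) * \<alpha> i)) f = 0)"
    and hess: "\<forall>i<m. (\<Sum>j<m. dact (\<alpha> i * \<alpha> j) f * F j) = 0"
  defines "\<xi> \<equiv> (\<Sum>i<m. Poly_Mapping.single 0 (eval_mp a (F i)) * \<alpha> i)"
  shows "dact (\<xi> * lv a n ^ (d - 2 * k)) f = 0"
proof -
  define e where "e = d - 2 * k"
  define l where "l = lv a n"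
  have hxi: "homog k \<xi>" unfolding \<xi>_def using \<alpha>_homog by (intro homog_sum homog_smult) auto
  have hle: "homog e (l ^ e)" using homog_pow[OF homog_lv[of a n], of e] by (simp add: l_def)
  have "homog (k + e) (\<xi> * l ^ e)" using homog_mult[OF hxi hle] .
  have k2: "2 * k \<le> d" using k_le by presburger
  have dke: "d - (k + e) = k" "d - (k + k) = e" using k2 unfolding e_def by auto
  have hg: "homog k (dact (\<xi> * l ^ e) f)" using homog_dact[OF \<open>homog (k + e) (\<xi> * l ^ e)\<close> f_homog] dke by simp
  have vg: "in_vars n (dact (\<xi> * l ^ e) f)" using in_vars_dact[OF f_vars] .
  have "dact (\<xi> * l ^ e) f = 0"
  proof (rule zero_by_derivs[OF _ hg vg])
    fix c :: "nat \<Rightarrow>\<^sub>0 nat" assume c: "Poly_Mapping.keys c \<subseteq> {..<n}" "mdeg c = k"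
    define \<beta> :: mpoly where "\<beta> = Poly_Mapping.single c 1"
    have v\<beta>: "in_vars n \<beta>" unfolding \<beta>_def using c by (intro in_vars_single)
    have h\<beta>: "homog k \<beta>" unfolding \<beta>_def using homog_single[of c 1] c by simp
    obtain cc where cc: "dact (\<beta> - (\<Sum>i<m. Poly_Mapping.single 0 (cc i) * \<alpha> i)) f = 0"
      using \<alpha>_span v\<beta> h\<beta> by blast
    then have d\<beta>: "dact \<beta> f = (\<Sum>i<m. Poly_Mapping.single 0 (cc i) * dact (\<alpha> i) f)"
      by (simp add: dact_diff_left dact_sum_left dact_smult_left)
    have hxb: "homog (k + k) (\<xi> * \<beta>)" using homog_mult[OF hxi h\<beta>] .
    have hxbf: "homog e (dact (\<xi> * \<beta>) f)" using homog_dact[OF hxb f_homog] dke by simp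
    have vxbf: "in_vars n (dact (\<xi> * \<beta>) f)" using in_vars_dact[OF f_vars] .
    have "dact (\<xi> * \<beta>) f = dact \<xi> (dact \<beta> f)" by (rule dact_mult)
    also have "\<dots> = (\<Sum>i<m. Poly_Mapping.single 0 (cc i) * (\<Sum>j<m. Poly_Mapping.single 0 (eval_mp a (F j)) * dact (\<alpha> i * \<alpha> j) f))"
    proof -
      have sw: "\<And>i j. dact (\<alpha> j) (dact (\<alpha> i) f) = dact (\<alpha> i * \<alpha> j) f" by (metis dact_mult mult.commute)
      show ?thesis unfolding d\<beta> \<xi>_def
        by (simp only: dact_sum_right dact_smult_right dact_sum_left dact_smult_left sw)
    qed
    finally have "eval_mp a (dact (\<xi> * \<beta>) f) = (\<Sum>i<m. cc i * (\<Sum>j<m. eval_mp a (F j) * eval_mp a (dact (\<alpha> i * \<alpha> j) f)))"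
      by (simp add: eval_smult_sum)
    also have "\<dots> = 0"
    proof (rule sum.neutral, rule ballI)
      fix i assume "i \<in> {..<m}"
      then have "eval_mp a (\<Sum>j<m. dact (\<alpha> i * \<alpha> j) f * F j) = 0" using hess by simp
      then have "(\<Sum>j<m. eval_mp a (F j) * eval_mp a (dact (\<alpha> i * \<alpha> j) f)) = 0"
        by (simp add: eval_sum eval_mult mult.commute)
      then show "cc i * (\<Sum>j<m. eval_mp a (F j) * eval_mp a (dact (\<alpha> i * \<alpha> j) f)) = 0" by simp
    qed
    finally have ev0: "eval_mp a (dact (\<xi> * \<beta>) f) = 0" .
    have "dact \<beta> (dact (\<xi> * l ^ e) f) = dact (l ^ e * (\<xi> * \<beta>)) f"
      by (simp add: dact_mult[symmetric] mult_ac)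
    also have "\<dots> = dact (l ^ e) (dact (\<xi> * \<beta>) f)" by (rule dact_mult)
    also have "\<dots> = Poly_Mapping.single 0 (fact e * eval_mp a (dact (\<xi> * \<beta>) f))"
      unfolding l_def by (rule dact_lpow[OF vxbf hxbf])
    also have "\<dots> = 0" using ev0 by simp
    finally show "dact (Poly_Mapping.single c 1) (dact (\<xi> * l ^ e) f) = 0" unfolding \<beta>_def .
  qed
  then show ?thesis unfolding e_def l_def .
qed

lemma part2:
  fixes n d k m :: nat and f :: mpoly and \<alpha> F :: "nat \<Rightarrow> mpoly"
  assumes f_vars: "in_vars n f"
    and f_homog: "homog d f"
    and k_le: "k \<le> d div 2"
    and \<alpha>_homog: "\<forall>i<m. homog k (\<alpha> i)"
    and p1: "\<And>a. dact ((\<Sum>i<m. Poly_Mapping.single 0 (eval_mp a (F i)) * \<alpha> i) * lv a n ^ (d - 2 * k)) f = 0"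
  shows "(\<Sum>i<m. F i * dact (\<alpha> i) f) = 0"
proof (rule identity_thm, rule allI)
  fix a
  define \<xi> where "\<xi> = (\<Sum>i<m. Poly_Mapping.single 0 (eval_mp a (F i)) * \<alpha> i)"
  define e where "e = d - 2 * k"
  define l where "l = lv a n"
  have k2: "2 * k \<le> d" using k_le by presburger
  have hxi: "homog k \<xi>" unfolding \<xi>_def using \<alpha>_homog by (intro homog_sum homog_smult) auto
  have h: "homog (d - k) (dact \<xi> f)" using homog_dact[OF hxi f_homog] .
  have v: "in_vars n (dact \<xi> f)" using in_vars_dact[OF f_vars] .
  have "eval_mp a (\<Sum>i<m. F i * dact (\<alpha> i) f) = eval_mp a (dact \<xi> f)"
    unfolding \<xi>_def by (simp add: eval_sum eval_mult dact_sum_left dact_smult_left eval_smult)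
  moreover have "Poly_Mapping.single 0 (fact (d - k) * eval_mp a (dact \<xi> f)) = (0::mpoly)"
  proof -
    have 1: "Poly_Mapping.single 0 (fact (d - k) * eval_mp a (dact \<xi> f)) = dact (l ^ (d - k)) (dact \<xi> f)"
      unfolding l_def by (rule dact_lpow[OF v h, symmetric])
    have 2: "l ^ (d - k) = l ^ k * l ^ e" using k2 unfolding e_def by (simp add: power_add[symmetric])
    have 3: "dact (l ^ k * l ^ e) (dact \<xi> f) = dact (l ^ k) (dact (\<xi> * l ^ e) f)"
      by (simp add: dact_mult[symmetric] mult_ac)
    have 4: "dact (\<xi> * l ^ e) f = 0" using p1[of a] unfolding \<xi>_def l_def e_def .
    show ?thesis by (simp only: 1 2 3 4 dact_zero_right)
  qed
  then have "fact (d - k) * eval_mp a (dact \<xi> f) = 0" by (metis lookup_single_eq lookup_zero)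
  ultimately show "eval_mp a (\<Sum>i<m. F i * dact (\<alpha> i) f) = 0" by simp
qed


theorem mainTheorem1:
  fixes n d k m :: nat
    and f :: mpoly
    and \<alpha> :: "nat \<Rightarrow> mpoly"
    and F :: "nat \<Rightarrow> mpoly"
  assumes f_vars: "in_vars n f"
    and f_homog: "homog d f"
    and k_le: "k \<le> d div 2"
    and \<alpha>_vars: "\<forall>i<m. in_vars n (\<alpha> i)"
    and \<alpha>_homog: "\<forall>i<m. homog k (\<alpha> i)"
    and \<alpha>_indep: "\<forall>c :: nat \<Rightarrow> real.
        dact (\<Sum>i<m. Poly_Mapping.single 0 (c i) * \<alpha> i) f = 0 \<longrightarrow> (\<forall>i<m. c i = 0)"
    and \<alpha>_span: "\<forall>\<beta>. in_vars n \<beta> \<and> homog k \<beta> \<longrightarrow>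
        (\<exists>c :: nat \<Rightarrow> real. dact (\<beta> - (\<Sum>i<m. Poly_Mapping.single 0 (c i) * \<alpha> i)) f = 0)"
    and F_vars: "\<forall>j<m. in_vars n (F j)"
    and hess: "\<forall>i<m. (\<Sum>j<m. dact (\<alpha> i * \<alpha> j) f * F j) = 0"
  shows "(\<forall>a :: nat \<Rightarrow> real.
           let l = (\<Sum>i<n. Poly_Mapping.single (Poly_Mapping.single i 1) (a i)) ;
               \<xi> = (\<Sum>i<m. Poly_Mapping.single 0 (eval_mp a (F i)) * \<alpha> i)
           in dact (\<xi> * l ^ (d - 2 * k)) f = 0)
         \<and> (\<Sum>i<m. F i * dact (\<alpha> i) f) = 0"
proof -
  have p1: "\<And>a. dact ((\<Sum>i<m. Poly_Mapping.single 0 (eval_mp a (F i)) * \<alpha> i) * lv a n ^ (d - 2 * k)) f = 0"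
    using part1[OF f_vars f_homog k_le \<alpha>_homog \<alpha>_span hess] by blast
  show ?thesis
    using p1 part2[OF f_vars f_homog k_le \<alpha>_homog p1] unfolding lv_def Let_def by blast
qed

end
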